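(* Let $G$ be a non-bipartite graph whose edge set decomposes into two bipartite spanning subgraphs $H_1$ and $H_2$ (i.e. $V(H_1)=V(H_2)=V(G)$, $E(H_1)\cap E(H_2)=\emptyset$, $E(H_1)\cup E(H_2)=E(G)$) such that $\Delta(G)=2\Delta(H_1)=2\Delta(H_2)$. If $H_1$ and $H_2$ have good signings, then the lexicographic product $G \circ \overline{K_2}$ has a good signing.
   Context: For a graph $H$ and an edge-signing $\sigma: E(H)\to\{-1,1\}$, the signed adjacency matrix $A^{\sigma}$ has $(i,j)$ entry $\sigma(ij)$ if $ij\in E(H)$ and $0$ otherwise; $\rho(H^\sigma)$ is the maximum absolute value of an eigenvalue of $A^\sigma$. A signing $\sigma$ of $H$ (with $\Delta(H)>1$) is a good signing if $\rho(H^\sigma)\le 2\sqrt{\Delta(H)-1}$, where $\Delta(H)$ is the maximum degree. $\overline{K_2}$ is the edgeless graph on two vertices. The lexicographic product $G\circ H$ has vertex set $V(G)\times V(H)$, with $(x,y)$ adjacent to $(z,t)$ iff $xz\in E(G)$, or $x=z$ and $yt\in E(H)$. *)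

theory Defs
  imports Complex_Main
begin

definition graph :: "'a set \<Rightarrow> 'a set set \<Rightarrow> bool" where
  "graph V E \<longleftrightarrow> finite V \<and> (\<forall>e\<in>E. \<exists>u v. u \<noteq> v \<and> u \<in> V \<and> v \<in> V \<and> e = {u, v})"

definition degree :: "'a set set \<Rightarrow> 'a \<Rightarrow> nat" where
  "degree E v = card {u. {u, v} \<in> E}"

definition maxdeg :: "'a set \<Rightarrow> 'a set set \<Rightarrow> nat" where
  "maxdeg V E = Max (degree E ` V)"

definition bipartite :: "'a set \<Rightarrow> 'a set set \<Rightarrow> bool" where
  "bipartite V E \<longleftrightarrow> (\<exists>A. A \<subseteq> V \<and> (\<forall>e\<in>E. card (e \<inter> A) = 1))"

definition signing :: "'a set set \<Rightarrow> ('a set \<Rightarrow> real) \<Rightarrow> bool" where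
  "signing E \<sigma> \<longleftrightarrow> (\<forall>e\<in>E. \<sigma> e = -1 \<or> \<sigma> e = 1)"

definition signed_adj :: "'a set set \<Rightarrow> ('a set \<Rightarrow> real) \<Rightarrow> 'a \<Rightarrow> 'a \<Rightarrow> real" where
  "signed_adj E \<sigma> u v = (if {u, v} \<in> E then \<sigma> {u, v} else 0)"

definition eigenvalue :: "'a set \<Rightarrow> ('a \<Rightarrow> 'a \<Rightarrow> real) \<Rightarrow> complex \<Rightarrow> bool" where
  "eigenvalue V M mu \<longleftrightarrow> (\<exists>x :: 'a \<Rightarrow> complex. (\<exists>v\<in>V. x v \<noteq> 0) \<and>
      (\<forall>u\<in>V. (\<Sum>w\<in>V. complex_of_real (M u w) * x w) = mu * x u))"

definition spec_radius :: "'a set \<Rightarrow> ('a \<Rightarrow> 'a \<Rightarrow> real) \<Rightarrow> real" where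
  "spec_radius V M = Max {cmod mu | mu. eigenvalue V M mu}"

definition good_signing :: "'a set \<Rightarrow> 'a set set \<Rightarrow> ('a set \<Rightarrow> real) \<Rightarrow> bool" where
  "good_signing V E \<sigma> \<longleftrightarrow> signing E \<sigma> \<and> maxdeg V E > 1 \<and>
     spec_radius V (signed_adj E \<sigma>) \<le> 2 * sqrt (real (maxdeg V E) - 1)"

definition lex_vertices :: "'a set \<Rightarrow> 'b set \<Rightarrow> ('a \<times> 'b) set" where
  "lex_vertices VG VH = VG \<times> VH"

definition lex_edges :: "'a set \<Rightarrow> 'a set set \<Rightarrow> 'b set \<Rightarrow> 'b set set \<Rightarrow> ('a \<times> 'b) set set" where
  "lex_edges VG EG VH EH = {{(x, y), (z, t)} | x y z t.
      x \<in> VG \<and> z \<in> VG \<and> y \<in> VH \<and> t \<in> VH \<and> ({x, z} \<in> EG \<or> (x = z \<and> {y, t} \<in> EH))}"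

definition K2bar_V :: "nat set" where "K2bar_V = {0, 1}"
definition K2bar_E :: "nat set set" where "K2bar_E = {}"

end

theory Submission
  imports Defs
begin

lemma Max_degen:
  assumes "\<not> (finite S \<and> S \<noteq> {})"
  shows "Max S = Max ({} :: 'b::linorder set)"
  using assms unfolding Max.eq_fold' by auto

definition sgn2 :: "nat \<Rightarrow> nat \<Rightarrow> real" where
  "sgn2 y t = (if y = t then 1 else -1)"

lemma rowsum:
  fixes A1 A2 :: "'a \<Rightarrow> 'a \<Rightarrow> real" and M :: "'a \<times> nat \<Rightarrow> 'a \<times> nat \<Rightarrow> real"
  assumes fin: "finite V"
    and M: "\<And>x y z t. x\<in>V \<Longrightarrow> z\<in>V \<Longrightarrow> y\<in>{0,1} \<Longrightarrow> t\<in>{0,1} \<Longrightarrow> M (x,y) (z,t) = A1 x z + sgn2 y t * A2 x z"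
    and x: "x \<in> V" and y: "y \<in> {0,1}"
  shows "(\<Sum>q\<in>V \<times> {0,1}. complex_of_real (M (x,y) q) * w q)
     = (\<Sum>z\<in>V. complex_of_real (A1 x z) * (w (z,0) + w (z,1)))
       + complex_of_real (sgn2 y 0) * (\<Sum>z\<in>V. complex_of_real (A2 x z) * (w (z,0) - w (z,1)))"
proof -
  have s1: "sgn2 y 1 = - sgn2 y 0" using y by (auto simp: sgn2_def)
  have "(\<Sum>q\<in>V \<times> {0,1}. complex_of_real (M (x,y) q) * w q)
      = (\<Sum>z\<in>V. \<Sum>t\<in>{0::nat,1}. complex_of_real (M (x,y) (z,t)) * w (z,t))"
    by (subst sum.cartesian_product) (simp add: split_def)
  also have "\<dots> = (\<Sum>z\<in>V. complex_of_real (A1 x z) * (w (z,0) + w (z,1))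
       + complex_of_real (sgn2 y 0) * (complex_of_real (A2 x z) * (w (z,0) - w (z,1))))"
  proof (rule sum.cong[OF refl])
    fix z assume z: "z \<in> V"
    show "(\<Sum>t\<in>{0::nat,1}. complex_of_real (M (x,y) (z,t)) * w (z,t)) =
      complex_of_real (A1 x z) * (w (z,0) + w (z,1))
       + complex_of_real (sgn2 y 0) * (complex_of_real (A2 x z) * (w (z,0) - w (z,1)))"
      using M[OF x z y] s1 by (simp add: algebra_simps)
  qed
  also have "\<dots> = (\<Sum>z\<in>V. complex_of_real (A1 x z) * (w (z,0) + w (z,1)))
       + complex_of_real (sgn2 y 0) * (\<Sum>z\<in>V. complex_of_real (A2 x z) * (w (z,0) - w (z,1)))"
    by (simp add: sum.distrib sum_distrib_left)
  finally show ?thesis .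
qed

lemma eig_char:
  fixes A1 A2 :: "'a \<Rightarrow> 'a \<Rightarrow> real" and M :: "'a \<times> nat \<Rightarrow> 'a \<times> nat \<Rightarrow> real"
  assumes fin: "finite V"
    and M: "\<And>x y z t. x\<in>V \<Longrightarrow> z\<in>V \<Longrightarrow> y\<in>{0,1} \<Longrightarrow> t\<in>{0,1} \<Longrightarrow> M (x,y) (z,t) = A1 x z + sgn2 y t * A2 x z"
  shows "eigenvalue (V \<times> {0,1}) M mu \<longleftrightarrow> eigenvalue V A1 (mu/2) \<or> eigenvalue V A2 (mu/2)"
proof
  assume "eigenvalue (V \<times> {0,1}) M mu"
  then obtain w where nz: "\<exists>p\<in>V \<times> {0,1}. w p \<noteq> 0"
    and eq: "\<forall>p\<in>V \<times> {0,1}. (\<Sum>q\<in>V \<times> {0,1}. complex_of_real (M p q) * w q) = mu * w p"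
    unfolding eigenvalue_def by blast
  define a where "a z = w (z,0) + w (z,1)" for z
  define b where "b z = w (z,0) - w (z,1)" for z
  define S1 where "S1 x = (\<Sum>z\<in>V. complex_of_real (A1 x z) * a z)" for x
  define S2 where "S2 x = (\<Sum>z\<in>V. complex_of_real (A2 x z) * b z)" for x
  have r0: "S1 x + S2 x = mu * w (x,0)" if x: "x \<in> V" for x
    using eq[rule_format, of "(x,0)"] rowsum[OF fin M x, of 0 w] x
    by (simp add: S1_def S2_def a_def b_def sgn2_def)
  have r1: "S1 x - S2 x = mu * w (x,1)" if x: "x \<in> V" for x
    using eq[rule_format, of "(x,1)"] rowsum[OF fin M x, of 1 w] x
    by (simp add: S1_def S2_def a_def b_def sgn2_def)
  have ea: "S1 x = mu/2 * a x" if "x \<in> V" for x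
    using r0[OF that] r1[OF that] unfolding a_def by (simp add: field_simps)
  have eb: "S2 x = mu/2 * b x" if "x \<in> V" for x
    using r0[OF that] r1[OF that] unfolding b_def by (simp add: field_simps)
  show "eigenvalue V A1 (mu/2) \<or> eigenvalue V A2 (mu/2)"
  proof (cases "\<exists>x\<in>V. a x \<noteq> 0")
    case True
    then show ?thesis unfolding eigenvalue_def using ea unfolding S1_def by blast
  next
    case False
    from nz obtain x y where xy: "x \<in> V" "y \<in> {0::nat,1}" "w (x,y) \<noteq> 0" by auto
    have "a x = 0" using False xy by auto
    then have "b x \<noteq> 0" using xy unfolding a_def b_def by (auto simp: algebra_simps)
    then show ?thesis unfolding eigenvalue_def using eb xy unfolding S2_def by blast
  qed
next
  assume "eigenvalue V A1 (mu/2) \<or> eigenvalue V A2 (mu/2)"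
  then show "eigenvalue (V \<times> {0,1}) M mu"
  proof
    assume "eigenvalue V A1 (mu/2)"
    then obtain a where nz: "\<exists>v\<in>V. a v \<noteq> 0"
      and eq: "\<forall>u\<in>V. (\<Sum>z\<in>V. complex_of_real (A1 u z) * a z) = mu/2 * a u"
      unfolding eigenvalue_def by blast
    define w where "w = (\<lambda>(z::'a, t::nat). a z)"
    show ?thesis unfolding eigenvalue_def
    proof (intro exI conjI ballI)
      show "\<exists>p\<in>V \<times> {0,1}. w p \<noteq> 0" using nz unfolding w_def by auto
    next
      fix p assume p: "p \<in> V \<times> {0::nat,1}"
      then obtain x y where xy: "p = (x,y)" "x \<in> V" "y \<in> {0::nat,1}" by auto
      have "(\<Sum>q\<in>V \<times> {0,1}. complex_of_real (M (x,y) q) * w q)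
         = (\<Sum>z\<in>V. complex_of_real (A1 x z) * (a z + a z))"
        using rowsum[OF fin M xy(2,3), of w] by (simp add: w_def)
      also have "\<dots> = 2 * (\<Sum>z\<in>V. complex_of_real (A1 x z) * a z)"
        by (simp add: sum_distrib_left algebra_simps)
      also have "\<dots> = mu * w (x,y)"
      proof -
        have "(\<Sum>z\<in>V. complex_of_real (A1 x z) * a z) = mu/2 * a x" using eq xy by blast
        then show ?thesis by (simp add: w_def algebra_simps)
      qed
      finally show "(\<Sum>q\<in>V \<times> {0,1}. complex_of_real (M p q) * w q) = mu * w p" using xy by simp
    qed
  next
    assume "eigenvalue V A2 (mu/2)"
    then obtain b where nz: "\<exists>v\<in>V. b v \<noteq> 0"
      and eq: "\<forall>u\<in>V. (\<Sum>z\<in>V. complex_of_real (A2 u z) * b z) = mu/2 * b u"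
      unfolding eigenvalue_def by blast
    define w where "w = (\<lambda>(z::'a, t::nat). complex_of_real (sgn2 t 0) * b z)"
    show ?thesis unfolding eigenvalue_def
    proof (intro exI conjI ballI)
      show "\<exists>p\<in>V \<times> {0,1}. w p \<noteq> 0" using nz unfolding w_def sgn2_def by auto
    next
      fix p assume p: "p \<in> V \<times> {0::nat,1}"
      then obtain x y where xy: "p = (x,y)" "x \<in> V" "y \<in> {0::nat,1}" by auto
      have "(\<Sum>q\<in>V \<times> {0,1}. complex_of_real (M (x,y) q) * w q)
         = complex_of_real (sgn2 y 0) * (\<Sum>z\<in>V. complex_of_real (A2 x z) * (b z + b z))"
        using rowsum[OF fin M xy(2,3), of w] by (simp add: w_def sgn2_def)
      also have "\<dots> = complex_of_real (sgn2 y 0) * (2 * (\<Sum>z\<in>V. complex_of_real (A2 x z) * b z))"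
        by (simp add: sum_distrib_left algebra_simps)
      also have "\<dots> = mu * w (x,y)"
      proof -
        have "(\<Sum>z\<in>V. complex_of_real (A2 x z) * b z) = mu/2 * b x" using eq xy by blast
        then show ?thesis by (simp add: w_def algebra_simps)
      qed
      finally show "(\<Sum>q\<in>V \<times> {0,1}. complex_of_real (M p q) * w q) = mu * w p" using xy by simp
    qed
  qed
qed


definition lexsig :: "'a set set \<Rightarrow> ('a set \<Rightarrow> real) \<Rightarrow> ('a set \<Rightarrow> real) \<Rightarrow> ('a \<times> nat) set \<Rightarrow> real" where
  "lexsig E1 s1 s2 e = (if fst ` e \<in> E1 then s1 (fst ` e)
     else if card (snd ` e) = 2 then - s2 (fst ` e) else s2 (fst ` e))"

lemma lex_mem:
  assumes "x \<in> V" "z \<in> V" "y \<in> {0,1}" "t \<in> {0,1}"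
  shows "{(x,y),(z,t)} \<in> lex_edges V E K2bar_V K2bar_E \<longleftrightarrow> {x,z} \<in> E"
proof
  assume "{(x,y),(z,t)} \<in> lex_edges V E K2bar_V K2bar_E"
  then obtain x' y' z' t' where e: "{(x,y),(z,t)} = {(x',y'),(z',t')}" and "{x',z'} \<in> E"
    unfolding lex_edges_def K2bar_E_def by auto
  moreover have "{x,z} = {x',z'}" using e by (auto simp: doubleton_eq_iff)
  ultimately show "{x,z} \<in> E" by simp
next
  assume "{x,z} \<in> E"
  then show "{(x,y),(z,t)} \<in> lex_edges V E K2bar_V K2bar_E"
    using assms unfolding lex_edges_def K2bar_V_def by blast
qed

lemma lex_adj:
  assumes "E1 \<inter> E2 = {}" "E1 \<union> E2 = E"
    and "x \<in> V" "z \<in> V" "y \<in> {0,1}" "t \<in> {0,1}"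
  shows "signed_adj (lex_edges V E K2bar_V K2bar_E) (lexsig E1 s1 s2) (x,y) (z,t)
     = signed_adj E1 s1 x z + sgn2 y t * signed_adj E2 s2 x z"
proof -
  have f: "fst ` {(x,y),(z,t)} = {x,z}" by auto
  have s: "snd ` {(x,y),(z,t)} = {y,t}" by auto
  have c: "card {y,t} = 2 \<longleftrightarrow> y \<noteq> t" by (cases "y = t") auto
  show ?thesis
    using assms unfolding signed_adj_def lex_mem[OF assms(3-6)] lexsig_def f s c sgn2_def
    by auto
qed

lemma lex_signing:
  assumes "E1 \<inter> E2 = {}" "E1 \<union> E2 = E" "signing E1 s1" "signing E2 s2"
  shows "signing (lex_edges V E K2bar_V K2bar_E) (lexsig E1 s1 s2)"
  unfolding signing_def
proof
  fix e assume "e \<in> lex_edges V E K2bar_V K2bar_E"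
  then obtain x y z t where e: "e = {(x,y),(z,t)}" and xz: "{x,z} \<in> E"
    unfolding lex_edges_def K2bar_E_def by auto
  have f: "fst ` e = {x,z}" using e by auto
  show "lexsig E1 s1 s2 e = -1 \<or> lexsig E1 s1 s2 e = 1"
    using assms xz unfolding lexsig_def f signing_def by auto
qed

lemma deg_lower:
  assumes g: "graph V E" and v: "v \<in> V"
  shows "2 * degree E v \<le> degree (lex_edges V E K2bar_V K2bar_E) (v,0)"
proof -
  let ?N = "{u. {u,v} \<in> E}"
  let ?R = "{q. {q,(v,0::nat)} \<in> lex_edges V E K2bar_V K2bar_E}"
  have fV: "finite V" using g unfolding graph_def by auto
  have NV: "?N \<subseteq> V"
  proof
    fix u assume "u \<in> ?N"
    then have "{u,v} \<in> E" by simp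
    then obtain a b where "a \<in> V" "b \<in> V" "{u,v} = {a,b}" using g unfolding graph_def by blast
    then show "u \<in> V" by (auto simp: doubleton_eq_iff)
  qed
  have fN: "finite ?N" using finite_subset[OF NV fV] .
  have sub: "?N \<times> {0,1} \<subseteq> ?R"
  proof
    fix q assume "q \<in> ?N \<times> {0::nat,1}"
    then obtain u t where q: "q = (u,t)" "{u,v} \<in> E" "t \<in> {0::nat,1}" by auto
    have "u \<in> V" using NV q by auto
    then show "q \<in> ?R" unfolding lex_edges_def K2bar_V_def using q v by blast
  qed
  have RV: "?R \<subseteq> V \<times> {0,1}"
  proof
    fix q assume "q \<in> ?R"
    then obtain x y z t where e: "{q,(v,0)} = {(x,y),(z,t)}" and "x \<in> V" "z \<in> V" "y \<in> K2bar_V" "t \<in> K2bar_V"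
      unfolding lex_edges_def by blast
    then show "q \<in> V \<times> {0,1}" unfolding K2bar_V_def by (auto simp: doubleton_eq_iff)
  qed
  have fR: "finite ?R" using finite_subset[OF RV] fV by auto
  have "card (?N \<times> {0::nat,1}) \<le> card ?R" using card_mono[OF fR sub] .
  moreover have "card (?N \<times> {0::nat,1}) = 2 * card ?N" by (simp add: card_cartesian_product)
  ultimately show ?thesis unfolding degree_def by simp
qed


theorem mainTheorem2:
  fixes V :: "'a set" and E E1 E2 :: "'a set set"
  assumes "graph V E" and "\<not> bipartite V E"
    and "graph V E1" and "graph V E2"
    and "bipartite V E1" and "bipartite V E2"
    and "E1 \<inter> E2 = {}" and "E1 \<union> E2 = E"
    and "maxdeg V E = 2 * maxdeg V E1" and "maxdeg V E = 2 * maxdeg V E2"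
    and "\<exists>\<sigma>1. good_signing V E1 \<sigma>1" and "\<exists>\<sigma>2. good_signing V E2 \<sigma>2"
  shows "\<exists>\<sigma>. good_signing (lex_vertices V K2bar_V) (lex_edges V E K2bar_V K2bar_E) \<sigma>"
proof -
  note g = assms(1) and dis = assms(7) and un = assms(8) and dd1 = assms(9) and dd2 = assms(10)
  obtain s1 where g1: "good_signing V E1 s1" using assms(11) by blast
  obtain s2 where g2: "good_signing V E2 s2" using assms(12) by blast
  define PE where "PE = lex_edges V E K2bar_V K2bar_E"
  define \<sigma> where "\<sigma> = lexsig E1 s1 s2"
  have PV: "lex_vertices V K2bar_V = V \<times> {0,1}" unfolding lex_vertices_def K2bar_V_def by simp
  have fV: "finite V" using g unfolding graph_def by auto
  define d1 where "d1 = maxdeg V E1"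
  have d1g: "d1 > 1" using g1 unfolding good_signing_def d1_def by simp
  have d2: "maxdeg V E2 = d1" using dd1 dd2 d1_def by simp
  have Vne: "V \<noteq> {}"
  proof
    assume "V = {}"
    then have "maxdeg V E = maxdeg V E1" unfolding maxdeg_def by simp
    then show False using dd1 d1g d1_def by simp
  qed
  have "maxdeg V E \<in> degree E ` V" unfolding maxdeg_def using fV Vne by (intro Max_in) auto
  then obtain v where v: "v \<in> V" "degree E v = maxdeg V E" by auto
  define D where "D = maxdeg (V \<times> {0,1}) PE"
  have "degree PE (v,0) \<le> D" unfolding D_def maxdeg_def using fV v(1) by (intro Max_ge) auto
  then have D4: "4 * d1 \<le> D" using deg_lower[OF g v(1)] v(2) dd1 d1_def unfolding PE_def by simp
  define A1 where "A1 = signed_adj E1 s1"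
  define A2 where "A2 = signed_adj E2 s2"
  define M where "M = signed_adj PE \<sigma>"
  have Mf: "M (x,y) (z,t) = A1 x z + sgn2 y t * A2 x z"
    if "x\<in>V" "z\<in>V" "y\<in>{0,1}" "t\<in>{0,1}" for x y z t
    unfolding M_def A1_def A2_def PE_def \<sigma>_def using lex_adj[OF dis un that] .
  define S1 where "S1 = {cmod mu | mu. eigenvalue V A1 mu}"
  define S2 where "S2 = {cmod mu | mu. eigenvalue V A2 mu}"
  define SM where "SM = {cmod mu | mu. eigenvalue (V \<times> {0,1}) M mu}"
  have SMeq: "SM = (\<lambda>r. 2 * r) ` (S1 \<union> S2)"
  proof
    show "SM \<subseteq> (\<lambda>r. 2 * r) ` (S1 \<union> S2)"
    proof
      fix r assume "r \<in> SM"
      then obtain mu where r: "r = cmod mu" and e: "eigenvalue (V \<times> {0,1}) M mu" unfolding SM_def by auto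
      have "r = 2 * cmod (mu/2)" using r by (simp add: norm_divide)
      moreover have "cmod (mu/2) \<in> S1 \<union> S2"
        using eig_char[OF fV Mf] e unfolding S1_def S2_def by blast
      ultimately show "r \<in> (\<lambda>r. 2 * r) ` (S1 \<union> S2)" by blast
    qed
  next
    show "(\<lambda>r. 2 * r) ` (S1 \<union> S2) \<subseteq> SM"
    proof
      fix r assume "r \<in> (\<lambda>r. 2 * r) ` (S1 \<union> S2)"
      then obtain l where r: "r = 2 * cmod l" and e: "eigenvalue V A1 l \<or> eigenvalue V A2 l"
        unfolding S1_def S2_def by auto
      have "eigenvalue (V \<times> {0,1}) M (2 * l)" using eig_char[OF fV Mf, of "2*l"] e by simp
      moreover have "r = cmod (2 * l)" using r by (simp add: norm_mult)
      ultimately show "r \<in> SM" unfolding SM_def by blast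
    qed
  qed
  define b where "b = 2 * sqrt (real d1 - 1)"
  have b1: "Max S1 \<le> b" using g1 unfolding good_signing_def spec_radius_def S1_def A1_def b_def d1_def by simp
  have b2: "Max S2 \<le> b" using g2 d2 unfolding good_signing_def spec_radius_def S2_def A2_def b_def by simp
  define T where "T = 2 * sqrt (real D - 1)"
  have s4: "sqrt (4::real) = 2" by (rule real_sqrt_unique) auto
  have "2 * b = 2 * sqrt (4 * (real d1 - 1))" unfolding b_def
    by (simp only: real_sqrt_mult s4)
  also have "\<dots> \<le> T" unfolding T_def using D4 by (simp add: real_sqrt_le_mono)
  finally have bT: "2 * b \<le> T" .
  have b0: "0 \<le> b" unfolding b_def using d1g by simp
  have inj2: "inj_on (\<lambda>r::real. 2 * r) A" for A by (rule inj_onI) simp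
  have MaxT: "Max SM \<le> T"
  proof (cases "finite SM \<and> SM \<noteq> {}")
    case True
    have f1: "finite S1" using True SMeq finite_imageD[OF _ inj2] by (metis finite_Un)
    have f2: "finite S2" using True SMeq finite_imageD[OF _ inj2] by (metis finite_Un)
    show ?thesis
    proof (rule Max.boundedI)
      show "finite SM" "SM \<noteq> {}" using True by auto
    next
      fix r assume "r \<in> SM"
      then obtain s where s: "r = 2 * s" "s \<in> S1 \<union> S2" using SMeq by auto
      have "s \<le> b"
      proof (cases "s \<in> S1")
        case True then show ?thesis using Max_ge[OF f1 True] b1 by simp
      next
        case False then have "s \<in> S2" using s by auto
        then show ?thesis using Max_ge[OF f2] b2 by force
      qed
      then show "r \<le> T" using s bT by simp
    qed
  next
    case False
    have "\<not> (finite S1 \<and> S1 \<noteq> {}) \<or> \<not> (finite S2 \<and> S2 \<noteq> {})"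
      using False SMeq by auto
    then have "Max SM = Max S1 \<or> Max SM = Max S2"
      using Max_degen[OF False] Max_degen[of S1] Max_degen[of S2] by auto
    then show ?thesis using b1 b2 bT b0 by auto
  qed
  have "good_signing (V \<times> {0,1}) PE \<sigma>"
    unfolding good_signing_def
  proof (intro conjI)
    show "signing PE \<sigma>" unfolding PE_def \<sigma>_def
      using lex_signing[OF dis un] g1 g2 unfolding good_signing_def by blast
    show "1 < maxdeg (V \<times> {0, 1}) PE" using D4 d1g D_def by simp
    show "spec_radius (V \<times> {0, 1}) (signed_adj PE \<sigma>) \<le> 2 * sqrt (real (maxdeg (V \<times> {0, 1}) PE) - 1)"
      using MaxT unfolding spec_radius_def SM_def M_def T_def D_def by simp
  qed
  then show ?thesis unfolding PV PE_def by blast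
qed

end
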